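(* Let $\mathcal{H}$ be a finite hypothesis class of maps $\mathcal{X}\times\{-1,1\}\to\{-1,1\}$ containing the constant classifiers, let $\mathcal{D}_E$ be an empirical distribution over labeled examples $(\hat x,a,y)$, let $\gamma\ge0$, and let $\{(x_j,c_j^{-1},c_j^{+1})\}_{j=1}^n$ be a cost-sensitive classification instance with real costs. Then the FairCSC problem $$\min_{\pi\in\Delta(\mathcal{H})}\ \mathbb{E}_{h\sim\pi}\Big[\sum_{j=1}^n c_j^{h(x_j)}\Big]\quad\text{subject to}\quad |\Delta_{FPR}(\pi,\mathcal{D}_E)|\le\gamma$$ has an optimal solution that is a distribution over $\mathcal{H}$ with support size at most $2$.
   Context: $\Delta(\mathcal{H})$ is the set of probability distributions over $\mathcal{H}$. For $j\in\{-1,1\}$, $FPR_j(\pi,\mathcal{D}_E)=\mathbb{E}_{h\sim\pi}[\Pr_{(x,y)\sim\mathcal{D}_E}(h(x)=+1\mid a=j,y=-1)]$ with $x=(\hat x,a)$, and $\Delta_{FPR}(\pi,\mathcal{D}_E)=FPR_1(\pi,\mathcal{D}_E)-FPR_{-1}(\pi,\mathcal{D}_E)$ (assume $\mathcal{D}_E$ contains examples with $y=-1$ in each group so these rates are defined). *)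

theory Defs
  imports "HOL-Probability.Probability"
begin

(* Examples are triples (xhat, a, y) with a, y in {-1,1} (encoded as int).
   A hypothesis maps x = (xhat, a) to a label in {-1,1} (encoded as int). *)

type_synonym 'x hyp = "'x \<times> int \<Rightarrow> int"

definition cond_fp :: "('x \<times> int \<times> int) pmf \<Rightarrow> 'x hyp \<Rightarrow> int \<Rightarrow> real" where
  "cond_fp D h j =
     measure_pmf.prob D {(xh, a, y). h (xh, a) = 1 \<and> a = j \<and> y = -1}
     / measure_pmf.prob D {(xh, a, y). a = j \<and> y = -1}"

definition FPR :: "int \<Rightarrow> 'x hyp pmf \<Rightarrow> ('x \<times> int \<times> int) pmf \<Rightarrow> real" where
  "FPR j \<pi> D = measure_pmf.expectation \<pi> (\<lambda>h. cond_fp D h j)"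

definition Delta_FPR :: "'x hyp pmf \<Rightarrow> ('x \<times> int \<times> int) pmf \<Rightarrow> real" where
  "Delta_FPR \<pi> D = FPR 1 \<pi> D - FPR (-1) \<pi> D"

definition csc_cost :: "nat \<Rightarrow> (nat \<Rightarrow> 'x \<times> int) \<Rightarrow> (nat \<Rightarrow> real) \<Rightarrow> (nat \<Rightarrow> real)
                          \<Rightarrow> 'x hyp \<Rightarrow> real" where
  "csc_cost n xs cneg cpos h = (\<Sum>j<n. if h (xs j) = 1 then cpos j else cneg j)"

definition exp_cost :: "nat \<Rightarrow> (nat \<Rightarrow> 'x \<times> int) \<Rightarrow> (nat \<Rightarrow> real) \<Rightarrow> (nat \<Rightarrow> real)
                          \<Rightarrow> 'x hyp pmf \<Rightarrow> real" where
  "exp_cost n xs cneg cpos \<pi> = measure_pmf.expectation \<pi> (csc_cost n xs cneg cpos)"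

end

theory Submission
  imports Defs
begin

lemma alg_a:
  fixes dl dr D cl cr m :: real
  assumes "dl < D" "D < dr" "(cl*(dr - D) + cr*(D - dl))/(dr - dl) \<ge> m"
  shows "(cr - m)/(dr - D) \<ge> (m - cl)/(D - dl)"
proof -
  have "cl*(dr - D) + cr*(D - dl) \<ge> m*(dr - dl)" using assms by (simp add: field_simps)
  hence "(cr - m)*(D - dl) \<ge> (m - cl)*(dr - D)" by (simp add: algebra_simps)
  thus ?thesis using assms by (simp add: field_simps)
qed

lemma alg_b:
  fixes dh D ch m s :: real
  assumes "dh < D" "s \<ge> (m - ch)/(D - dh)"
  shows "ch \<ge> m + s*(dh - D)"
proof -
  have "s*(D - dh) \<ge> m - ch" using assms by (simp add: field_simps)
  thus ?thesis by (simp add: algebra_simps)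
qed

lemma alg_c:
  fixes dh D ch m s :: real
  assumes "D < dh" "(ch - m)/(dh - D) \<ge> s"
  shows "ch \<ge> m + s*(dh - D)"
proof -
  have "s*(dh - D) \<le> ch - m" using assms by (simp add: field_simps)
  thus ?thesis by (simp add: algebra_simps)
qed

lemma alg_d:
  fixes dl dr D cl cr :: real
  assumes "dl < D" "D < dr"
  defines "t \<equiv> (dr - D)/(dr - dl)"
  shows "0 \<le> t" "t \<le> 1" "t*dl + (1-t)*dr = D"
    "t*cl + (1-t)*cr = (cl*(dr - D) + cr*(D - dl))/(dr - dl)"
proof -
  have nz: "dr - dl > 0" using assms by auto
  have t1: "1 - t = (D - dl)/(dr - dl)" unfolding t_def using nz by (simp add: field_simps)
  show "0 \<le> t" "t \<le> 1" using assms unfolding t_def by (auto simp: divide_simps)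
  have "t*dl + (1-t)*dr = ((dr - D)*dl + (D - dl)*dr)/(dr - dl)" unfolding t1 unfolding t_def
    by (simp add: add_divide_distrib)
  also have "(dr - D)*dl + (D - dl)*dr = D*(dr - dl)" by (simp add: algebra_simps)
  finally show "t*dl + (1-t)*dr = D" using nz by simp
  have "t*cl + (1-t)*cr = ((dr - D)*cl + (D - dl)*cr)/(dr - dl)" unfolding t1 unfolding t_def
    by (simp add: add_divide_distrib)
  then show "t*cl + (1-t)*cr = (cl*(dr - D) + cr*(D - dl))/(dr - dl)"
    by (simp add: algebra_simps)
qed

lemma step1:
  fixes w d c :: "'a \<Rightarrow> real"
  assumes fin: "finite S" and wpos: "\<forall>h\<in>S. w h > 0" and w1: "sum w S = 1"
  shows "\<exists>l\<in>S. \<exists>r\<in>S. \<exists>t. 0\<le>t \<and> t\<le>1 \<and> t*d l+(1-t)*d r = (\<Sum>h\<in>S. w h * d h)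
           \<and> t*c l+(1-t)*c r \<le> (\<Sum>h\<in>S. w h * c h)"
proof -
  define D where "D = (\<Sum>h\<in>S. w h * d h)"
  define L where "L = {h\<in>S. d h < D}"
  define E where "E = {h\<in>S. d h = D}"
  define R where "R = {h\<in>S. d h > D}"
  define g where "g l r = (c l*(d r - D) + c r*(D - d l))/(d r - d l)" for l r
  define V where "V = (\<lambda>(l,r). g l r) ` (L \<times> R) \<union> c ` E"
  have S0: "S \<noteq> {}" using w1 by auto
  have sumdev: "(\<Sum>h\<in>S. w h * (d h - D)) = 0"
  proof -
    have "(\<Sum>h\<in>S. w h * (d h - D)) = (\<Sum>h\<in>S. w h * d h) - (\<Sum>h\<in>S. w h) * D"
      by (simp add: right_diff_distrib sum_subtractf sum_distrib_right)
    thus ?thesis using w1 unfolding D_def by simp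
  qed
  have LR: "L = {} \<Longrightarrow> R = {}"
  proof -
    assume "L = {}"
    hence nn: "\<forall>h\<in>S. w h * (d h - D) \<ge> 0"
    proof (intro ballI)
      fix h assume "L = {}" "h \<in> S"
      hence "d h - D \<ge> 0" unfolding L_def by auto
      thus "w h * (d h - D) \<ge> 0" using wpos \<open>h \<in> S\<close> by (intro mult_nonneg_nonneg) (auto simp: less_imp_le)
    qed
    have z: "\<forall>h\<in>S. w h * (d h - D) = 0"
      by (rule iffD1[OF sum_nonneg_eq_0_iff[OF fin nn[rule_format]] sumdev])
    show "R = {}"
    proof (rule ccontr)
      assume "R \<noteq> {}"
      then obtain h where h: "h \<in> S" "d h > D" unfolding R_def by auto
      have "w h * (d h - D) > 0" using wpos h by simp
      thus False using z h by simp
    qed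
  qed
  have VE: "V \<noteq> {}"
  proof (cases "L = {}")
    case True
    then have "R = {}" using LR by simp
    have eqD: "d h = D" if "h \<in> S" for h
    proof -
      have "h \<notin> L" "h \<notin> R" using True \<open>R = {}\<close> by auto
      hence "\<not> d h < D" "\<not> D < d h" using that unfolding L_def R_def by auto
      thus ?thesis by linarith
    qed
    hence "E = S" unfolding E_def by auto
    thus ?thesis using S0 unfolding V_def by auto
  next
    case False
    have "R \<noteq> {}"
    proof
      assume "R = {}"
      hence np: "\<forall>h\<in>S. w h * (D - d h) \<ge> 0"
      proof (intro ballI)
        fix h assume "R = {}" "h \<in> S"
        hence "D - d h \<ge> 0" unfolding R_def by auto
        thus "w h * (D - d h) \<ge> 0" using wpos \<open>h \<in> S\<close> by (intro mult_nonneg_nonneg) (auto simp: less_imp_le)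
      qed
      have "(\<Sum>h\<in>S. w h * (D - d h)) = - (\<Sum>h\<in>S. w h * (d h - D))"
        unfolding sum_negf[symmetric] by (rule sum.cong) (auto simp: algebra_simps)
      hence "(\<Sum>h\<in>S. w h * (D - d h)) = 0" using sumdev by simp
      note s0 = this
      have z: "\<forall>h\<in>S. w h * (D - d h) = 0"
        by (rule iffD1[OF sum_nonneg_eq_0_iff[OF fin np[rule_format]] s0])
      from False obtain h where "h \<in> L" by auto
      hence h: "h \<in> S" "d h < D" unfolding L_def by auto
      have "w h * (D - d h) > 0" using wpos h by simp
      thus False using z h by simp
    qed
    thus ?thesis using False unfolding V_def by auto
  qed
  have Vfin: "finite V" unfolding V_def L_def R_def E_def using fin by auto
  define m where "m = Min V"
  have mV: "m \<in> V" using Vfin VE unfolding m_def by simp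
  have mle: "\<And>v. v \<in> V \<Longrightarrow> m \<le> v" using Vfin unfolding m_def by simp
  define s where "s = (if L = {} then 0 else Max ((\<lambda>l. (m - c l)/(D - d l)) ` L))"
  have Lfin: "finite L" unfolding L_def using fin by auto
  have above: "c h \<ge> m + s*(d h - D)" if hS: "h \<in> S" for h
  proof -
    consider "h \<in> L" | "h \<in> E" | "h \<in> R" using hS unfolding L_def E_def R_def by force
    thus ?thesis
    proof cases
      case 1
      then have "s \<ge> (m - c h)/(D - d h)" unfolding s_def using Lfin by auto
      thus ?thesis using alg_b 1 unfolding L_def by auto
    next
      case 2
      then have "m \<le> c h" using mle unfolding V_def by auto
      thus ?thesis using 2 unfolding E_def by auto
    next
      case 3
      then have Lne: "L \<noteq> {}" using LR by auto
      have "s \<in> (\<lambda>l. (m - c l)/(D - d l)) ` L" unfolding s_def using Lne Lfin by simp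
      then obtain l where l: "l \<in> L" "s = (m - c l)/(D - d l)" by auto
      have "m \<le> g l h" using mle l 3 unfolding V_def by auto
      hence gm: "(c l*(d h - D) + c h*(D - d l))/(d h - d l) \<ge> m" unfolding g_def .
      have dl: "d l < D" using l(1) unfolding L_def by simp
      have dh: "D < d h" using 3 unfolding R_def by simp
      have "(c h - m)/(d h - D) \<ge> (m - c l)/(D - d l)"
        by (rule alg_a[OF dl dh gm])
      hence "(c h - m)/(d h - D) \<ge> s" using l(2) by simp
      thus ?thesis by (rule alg_c[OF dh])
    qed
  qed
  have "(\<Sum>h\<in>S. w h * c h) \<ge> (\<Sum>h\<in>S. w h * (m + s*(d h - D)))"
    using above wpos by (intro sum_mono) (auto intro!: mult_left_mono less_imp_le)
  also have "(\<Sum>h\<in>S. w h * (m + s*(d h - D))) = m * sum w S + s * (\<Sum>h\<in>S. w h * (d h - D))"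
  proof -
    have "(\<Sum>h\<in>S. w h * (m + s*(d h - D))) = (\<Sum>h\<in>S. m * w h + s * (w h * (d h - D)))"
      by (rule sum.cong) (auto simp: algebra_simps)
    also have "\<dots> = (\<Sum>h\<in>S. m * w h) + (\<Sum>h\<in>S. s * (w h * (d h - D)))"
      by (rule sum.distrib)
    also have "\<dots> = m * sum w S + s * (\<Sum>h\<in>S. w h * (d h - D))"
      by (simp add: sum_distrib_left)
    finally show ?thesis .
  qed
  also have "\<dots> = m" using sumdev w1 by simp
  finally have Cm: "m \<le> (\<Sum>h\<in>S. w h * c h)" .
  show ?thesis
  proof (cases "m \<in> c ` E")
    case True
    then obtain h where h: "h \<in> E" "m = c h" by auto
    show ?thesis
      by (rule bexI[of _ h], rule bexI[of _ h], rule exI[of _ 1]) (use h Cm in \<open>auto simp: E_def D_def\<close>)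
  next
    case False
    then obtain l r where lr: "l \<in> L" "r \<in> R" "m = g l r" using mV unfolding V_def by auto
    have dl: "d l < D" "D < d r" using lr unfolding L_def R_def by auto
    have a1: "0 \<le> (d r - D)/(d r - d l)" "(d r - D)/(d r - d l) \<le> 1"
      "(d r - D)/(d r - d l) * d l + (1 - (d r - D)/(d r - d l)) * d r = D"
      using alg_d(1-3)[OF dl] by auto
    have a2: "(d r - D)/(d r - d l) * c l + (1 - (d r - D)/(d r - d l)) * c r = g l r"
      unfolding g_def by (rule alg_d(4)[OF dl])
    have lS: "l \<in> S" "r \<in> S" using lr unfolding L_def R_def by auto
    show ?thesis
      apply (rule bexI[OF _ lS(1)], rule bexI[OF _ lS(2)], rule exI[of _ "(d r - D)/(d r - d l)"])
      using a1 a2 lr(3) Cm unfolding D_def by simp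
  qed
qed

definition Kset :: "'a set \<Rightarrow> ('a \<Rightarrow> real) \<Rightarrow> real \<Rightarrow> ('a \<times> 'a \<times> real) set" where
 "Kset H d \<gamma> = {(l,r,t). l\<in>H \<and> r\<in>H \<and> t \<in> {1, (\<gamma> - d r)/(d l - d r), (-\<gamma> - d r)/(d l - d r)}
     \<and> 0\<le>t \<and> t\<le>1 \<and> \<bar>t*d l + (1-t)*d r\<bar> \<le> \<gamma>}"

lemma endpoint:
  fixes dl dr cl cr g t0 :: real
  assumes "cl \<le> cr" "0 \<le> t0" "t0 \<le> 1" "g < dl" "t0*dl + (1-t0)*dr \<le> g"
  defines "t \<equiv> (g - dr)/(dl - dr)"
  shows "0 \<le> t" "t \<le> 1" "t*dl + (1-t)*dr = g" "t*cl + (1-t)*cr \<le> t0*cl + (1-t0)*cr"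
proof -
  have "dr < dl"
  proof (rule ccontr)
    assume "\<not> dr < dl"
    hence "t0*dl + (1-t0)*dr \<ge> t0*dl + (1-t0)*dl" using assms(3) by (intro add_left_mono mult_left_mono) auto
    thus False using assms by (simp add: algebra_simps)
  qed
  hence p: "dl - dr > 0" by simp
  have "t0*(dl - dr) \<le> g - dr" using assms(5) by (simp add: algebra_simps)
  hence tt0: "t0 \<le> t" unfolding t_def using p by (simp add: field_simps)
  show "0 \<le> t" using tt0 assms by simp
  show "t \<le> 1" unfolding t_def using p assms by (simp add: field_simps)
  have "t*(dl - dr) = g - dr" unfolding t_def using p by simp
  thus "t*dl + (1-t)*dr = g" by (simp add: algebra_simps)
  have "t*(cl - cr) \<le> t0*(cl - cr)" using tt0 assms(1) by (intro mult_right_mono_neg) auto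
  thus "t*cl + (1-t)*cr \<le> t0*cl + (1-t0)*cr" by (simp add: algebra_simps)
qed

lemma step2a:
  fixes d c :: "'a \<Rightarrow> real"
  assumes "l\<in>H" "r\<in>H" "0\<le>t0" "t0\<le>1" "\<bar>t0*d l + (1-t0)*d r\<bar> \<le> \<gamma>" "c l \<le> c r"
  shows "\<exists>(l',r',t')\<in>Kset H d \<gamma>. t'*c l' + (1-t')*c r' \<le> t0*c l + (1-t0)*c r"
proof -
  consider "\<bar>d l\<bar> \<le> \<gamma>" | "d l > \<gamma>" | "d l < -\<gamma>" by linarith
  thus ?thesis
  proof cases
    case 1
    have "(l,r,1) \<in> Kset H d \<gamma>" using 1 assms unfolding Kset_def by auto
    moreover have "c l \<le> t0*c l + (1-t0)*c r"
    proof -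
      have "(1-t0)*c l \<le> (1-t0)*c r" using assms by (intro mult_left_mono) auto
      thus ?thesis by (simp add: algebra_simps)
    qed
    ultimately show ?thesis by (intro bexI[of _ "(l,r,1)"]) auto
  next
    case 2
    define t' where "t' = (\<gamma> - d r)/(d l - d r)"
    have m: "t0*d l + (1-t0)*d r \<le> \<gamma>" using assms(5) by simp
    note e = endpoint[of "c l" "c r" t0 \<gamma> "d l" "d r", OF assms(6,3,4) 2 m, folded t'_def]
    have "\<gamma> \<ge> 0" using assms(5) by simp
    hence "(l,r,t') \<in> Kset H d \<gamma>" using e(1,2,3) assms(1,2) unfolding Kset_def t'_def by simp
    thus ?thesis using e(4) by (intro bexI[of _ "(l,r,t')"]) auto
  next
    case 3
    define t' where "t' = (-\<gamma> - d r)/(d l - d r)"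
    have m: "t0*(- d l) + (1-t0)*(- d r) \<le> \<gamma>" using assms(5) by (simp add: algebra_simps)
    have g: "\<gamma> < - d l" using 3 by simp
    have eq: "(\<gamma> - - d r) / (- d l - - d r) = t'"
    proof -
      have "(\<gamma> - - d r) / (- d l - - d r) = (-(-\<gamma> - d r)) / (-(d l - d r))" by simp
      also have "\<dots> = (-\<gamma> - d r)/(d l - d r)" by (rule minus_divide_divide)
      finally show ?thesis unfolding t'_def .
    qed
    note e = endpoint[of "c l" "c r" t0 \<gamma> "- d l" "- d r", OF assms(6,3,4) g m, unfolded eq]
    have mean: "t'*d l + (1-t')*d r = -\<gamma>"
    proof -
      have "t'*d l + (1-t')*d r = -(t'*(-d l) + (1-t')*(-d r))" by (simp add: algebra_simps)
      thus ?thesis using e(3) by simp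
    qed
    have "\<gamma> \<ge> 0" using assms(5) by simp
    hence "(l,r,t') \<in> Kset H d \<gamma>" using e(1,2) mean assms(1,2) unfolding Kset_def t'_def by simp
    thus ?thesis using e(4) by (intro bexI[of _ "(l,r,t')"]) auto
  qed
qed

lemma step2:
  fixes d c :: "'a \<Rightarrow> real"
  assumes "l\<in>H" "r\<in>H" "0\<le>t0" "t0\<le>1" "\<bar>t0*d l + (1-t0)*d r\<bar> \<le> \<gamma>"
  shows "\<exists>(l',r',t')\<in>Kset H d \<gamma>. t'*c l' + (1-t')*c r' \<le> t0*c l + (1-t0)*c r"
proof (cases "c l \<le> c r")
  case True
  show ?thesis by (rule step2a[OF assms True])
next
  case False
  have a5: "\<bar>(1-t0)*d r + (1-(1-t0))*d l\<bar> \<le> \<gamma>" using assms(5) by (simp add: algebra_simps)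
  have a34: "0 \<le> 1 - t0" "1 - t0 \<le> 1" "c r \<le> c l" using assms(3,4) False by auto
  have ex: "\<exists>(l',r',t')\<in>Kset H d \<gamma>. t'*c l' + (1-t')*c r' \<le> (1-t0)*c r + (1-(1-t0))*c l"
    by (rule step2a[OF assms(2,1) a34(1,2) a5 a34(3)])
  have eq: "(1-t0)*c r + (1-(1-t0))*c l = t0*c l + (1-t0)*c r" by (simp add: algebra_simps)
  show ?thesis using ex unfolding eq .
qed
definition mix :: "'a \<Rightarrow> 'a \<Rightarrow> real \<Rightarrow> 'a pmf" where
  "mix l r t = map_pmf (\<lambda>b. if b then l else r) (bernoulli_pmf t)"

lemma mix_exp:
  fixes f :: "'a \<Rightarrow> real"
  assumes "0 \<le> t" "t \<le> 1"
  shows "measure_pmf.expectation (mix l r t) f = t * f l + (1-t) * f r"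
  using assms unfolding mix_def by (simp add: algebra_simps)

lemma mix_card: "card (set_pmf (mix l r t)) \<le> 2"
proof -
  have "set_pmf (mix l r t) \<subseteq> {l, r}" unfolding mix_def by auto
  hence "card (set_pmf (mix l r t)) \<le> card {l, r}" by (intro card_mono) auto
  also have "\<dots> \<le> 2" by (simp add: card_insert_if)
  finally show ?thesis .
qed

lemma mix_set: "l \<in> H \<Longrightarrow> r \<in> H \<Longrightarrow> set_pmf (mix l r t) \<subseteq> H"
  unfolding mix_def by auto

lemma pmf_exp_sum:
  fixes f :: "'a \<Rightarrow> real"
  assumes "finite (set_pmf p)"
  shows "measure_pmf.expectation p f = (\<Sum>h\<in>set_pmf p. pmf p h * f h)"
  using integral_measure_pmf[OF assms, of p f] by simp

lemma const_fp:
  fixes h0 :: "'x hyp" and M :: "('x \<times> int \<times> int) multiset"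
  assumes "M \<noteq> {#}" "\<forall>xh a. a \<in> {-1, 1} \<longrightarrow> h0 (xh, a) = 1"
    and "j \<in> {-1, 1}" "(xh, j, -1) \<in># M"
  shows "cond_fp (pmf_of_multiset M) h0 j = 1"
proof -
  have eq: "{(xh, a, y). h0 (xh, a) = 1 \<and> a = j \<and> y = -1} = {(xh, a, y). a = j \<and> y = (-1::int)}"
    using assms(2,3) by auto
  have "set_pmf (pmf_of_multiset M) \<inter> {(xh, a, y). a = j \<and> y = (-1::int)} \<noteq> {}"
    using assms(1,4) by auto
  hence "measure_pmf.prob (pmf_of_multiset M) {(xh, a, y). a = j \<and> y = (-1::int)} \<noteq> 0"
    by (simp add: measure_pmf_zero_iff)
  thus ?thesis unfolding cond_fp_def eq by simp
qed

theorem lemma1: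
  fixes H :: "'x hyp set"
    and M :: "('x \<times> int \<times> int) multiset"
    and \<gamma> :: real
    and n :: nat
    and xs :: "nat \<Rightarrow> 'x \<times> int"
    and cneg cpos :: "nat \<Rightarrow> real"
  assumes "finite H"
    and "\<forall>h\<in>H. \<forall>xh a. a \<in> {-1, 1} \<longrightarrow> h (xh, a) \<in> {-1, 1}"
    and "\<exists>h\<in>H. \<forall>xh a. a \<in> {-1, 1} \<longrightarrow> h (xh, a) = 1"
    and "\<exists>h\<in>H. \<forall>xh a. a \<in> {-1, 1} \<longrightarrow> h (xh, a) = -1"
    and "M \<noteq> {#}"
    and "\<forall>(xh, a, y) \<in> set_mset M. a \<in> {-1, 1} \<and> y \<in> {-1, 1}"
    and "\<forall>j \<in> {-1, 1::int}. \<exists>xh. (xh, j, -1) \<in># M"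
    and "\<gamma> \<ge> 0"
    and "\<forall>j<n. snd (xs j) \<in> {-1, 1}"
  shows "\<exists>\<pi>. set_pmf \<pi> \<subseteq> H \<and> card (set_pmf \<pi>) \<le> 2
           \<and> \<bar>Delta_FPR \<pi> (pmf_of_multiset M)\<bar> \<le> \<gamma>
           \<and> (\<forall>\<pi>'. set_pmf \<pi>' \<subseteq> H \<and> \<bar>Delta_FPR \<pi>' (pmf_of_multiset M)\<bar> \<le> \<gamma>
                  \<longrightarrow> exp_cost n xs cneg cpos \<pi> \<le> exp_cost n xs cneg cpos \<pi>')"
proof -
  define D0 where "D0 = pmf_of_multiset M"
  define dd where "dd h = cond_fp D0 h 1 - cond_fp D0 h (-1)" for h
  define cc where "cc = csc_cost n xs cneg cpos"
  define K where "K = Kset H dd \<gamma>"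
  define cost where "cost = (\<lambda>(l,r,t). t * cc l + (1-t) * cc r)"
  have DF_mix: "Delta_FPR (mix l r t) D0 = t * dd l + (1-t) * dd r" if "0 \<le> t" "t \<le> 1" for l r t
    unfolding Delta_FPR_def FPR_def mix_exp[OF that] dd_def by (simp add: algebra_simps)
  have EC_mix: "exp_cost n xs cneg cpos (mix l r t) = t * cc l + (1-t) * cc r" if "0 \<le> t" "t \<le> 1" for l r t
    unfolding exp_cost_def cc_def by (rule mix_exp[OF that])
  have DF_gen: "Delta_FPR p D0 = (\<Sum>h\<in>set_pmf p. pmf p h * dd h)" if "finite (set_pmf p)" for p
    unfolding Delta_FPR_def FPR_def dd_def pmf_exp_sum[OF that]
    by (simp add: right_diff_distrib sum_subtractf)
  have EC_gen: "exp_cost n xs cneg cpos p = (\<Sum>h\<in>set_pmf p. pmf p h * cc h)" if "finite (set_pmf p)" for p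
    unfolding exp_cost_def cc_def pmf_exp_sum[OF that] by simp
  have Kfin: "finite K"
  proof -
    have "K \<subseteq> (\<Union>l\<in>H. \<Union>r\<in>H. {(l,r,1),(l,r,(\<gamma> - dd r)/(dd l - dd r)),(l,r,(-\<gamma> - dd r)/(dd l - dd r))})"
      unfolding K_def Kset_def by auto
    moreover have "finite (\<Union>l\<in>H. \<Union>r\<in>H. {(l,r,1),(l,r,(\<gamma> - dd r)/(dd l - dd r)),(l,r,(-\<gamma> - dd r)/(dd l - dd r))})"
      using assms(1) by auto
    ultimately show ?thesis by (rule finite_subset)
  qed
  from assms(3) obtain h0 where h0: "h0 \<in> H" "\<forall>xh a. a \<in> {-1, 1} \<longrightarrow> h0 (xh, a) = 1" ..
  have "\<exists>xh. (xh, 1, -1) \<in># M" using assms(7) by simp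
  then obtain x1 where x1: "(x1, 1, -1) \<in># M" ..
  have "\<exists>xh. (xh, -1, -1) \<in># M" using assms(7) by simp
  then obtain x2 where x2: "(x2, -1, -1) \<in># M" ..
  have "dd h0 = 0" unfolding dd_def D0_def
    using const_fp[OF assms(5) h0(2) _ x1] const_fp[OF assms(5) h0(2) _ x2] by simp
  hence "(h0, h0, 1) \<in> K" unfolding K_def Kset_def using h0 assms(8) by auto
  hence Kne: "K \<noteq> {}" by auto
  define mc where "mc = Min (cost ` K)"
  have "mc \<in> cost ` K" unfolding mc_def using Kfin Kne by simp
  then obtain ls rs ts where ks: "(ls, rs, ts) \<in> K" "cost (ls, rs, ts) = mc" by auto
  have kmin: "mc \<le> cost k" if "k \<in> K" for k unfolding mc_def using Kfin that by simp
  have ksp: "ls \<in> H" "rs \<in> H" "0 \<le> ts" "ts \<le> 1" "\<bar>ts * dd ls + (1-ts) * dd rs\<bar> \<le> \<gamma>"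
    using ks(1) unfolding K_def Kset_def by auto
  show ?thesis
  proof (intro exI[of _ "mix ls rs ts"] conjI allI impI)
    show "set_pmf (mix ls rs ts) \<subseteq> H" by (rule mix_set[OF ksp(1,2)])
    show "card (set_pmf (mix ls rs ts)) \<le> 2" by (rule mix_card)
    show "\<bar>Delta_FPR (mix ls rs ts) (pmf_of_multiset M)\<bar> \<le> \<gamma>"
      using DF_mix[OF ksp(3,4)] ksp(5) unfolding D0_def by simp
    fix p assume p: "set_pmf p \<subseteq> H \<and> \<bar>Delta_FPR p (pmf_of_multiset M)\<bar> \<le> \<gamma>"
    have pfin: "finite (set_pmf p)" by (rule finite_subset[OF _ assms(1)]) (use p in simp)
    have wpos: "\<forall>h\<in>set_pmf p. pmf p h > 0" by (simp add: pmf_positive)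
    have w1: "sum (pmf p) (set_pmf p) = 1" using sum_pmf_eq_1[OF pfin] by simp
    obtain l r t0 where lr: "l \<in> set_pmf p" "r \<in> set_pmf p" "0 \<le> t0" "t0 \<le> 1"
      "t0 * dd l + (1-t0) * dd r = (\<Sum>h\<in>set_pmf p. pmf p h * dd h)"
      "t0 * cc l + (1-t0) * cc r \<le> (\<Sum>h\<in>set_pmf p. pmf p h * cc h)"
      using step1[OF pfin wpos w1, of dd cc] by blast
    have feas: "\<bar>t0 * dd l + (1-t0) * dd r\<bar> \<le> \<gamma>" using lr(5) DF_gen[OF pfin] p unfolding D0_def by simp
    have lH: "l \<in> H" "r \<in> H" using lr p by auto
    from step2[where d=dd and c=cc, OF lH lr(3,4) feas] obtain k where
      k0: "k \<in> K" "case k of (l', r', t') \<Rightarrow> t' * cc l' + (1-t') * cc r' \<le> t0 * cc l + (1-t0) * cc r"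
      unfolding K_def ..
    obtain l' r' t' where kk: "k = (l', r', t')" by (cases k)
    have k: "(l', r', t') \<in> K" "t' * cc l' + (1-t') * cc r' \<le> t0 * cc l + (1-t0) * cc r"
      using k0 unfolding kk by simp_all
    have "exp_cost n xs cneg cpos (mix ls rs ts) = mc" using EC_mix[OF ksp(3,4)] ks(2) unfolding cost_def by simp
    also have "\<dots> \<le> cost (l', r', t')" by (rule kmin[OF k(1)])
    also have "\<dots> \<le> t0 * cc l + (1-t0) * cc r" using k(2) unfolding cost_def by simp
    also have "\<dots> \<le> exp_cost n xs cneg cpos p" using lr(6) EC_gen[OF pfin] by simp
    finally show "exp_cost n xs cneg cpos (mix ls rs ts) \<le> exp_cost n xs cneg cpos p" .
  qed
qed

end
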